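(* Let $M$ be a transitive model of $\mathsf{ZF}$, let $A\subseteq\omega$ be evasive with respect to $M$, and let $\mathbb{P}=\mathbb{H}^M$. Let $\mathcal{D}\in M$ be an open dense subset of $\mathbb{P}$ (in $M$), and let $T\in\mathbb{P}$. Then there is $T'\in\mathcal{D}$ with $T'\le_A T$.
   Context: $\mathbb{H}$ is the poset of all trees $T \subseteq \omega^{<\omega}$ such that for every $t \in T$ with $t \sqsupseteq \mathrm{Stem}(T)$, the set $\{z\in\omega : t^\frown z \notin T\}$ is finite, ordered by inclusion; $\mathrm{Stem}(T)$ is the maximal node of $T$ comparable with every node of $T$; $\mathbb{H}^M$ is this poset computed in $M$. A set $A\subseteq\omega$ is evasive with respect to $M$ iff $A$ is infinite and no infinite subset of $A$ belongs to $M$. For $t,t'\in\omega^{<\omega}$, $t'\sqsupseteq_A t$ iff $t'\sqsupseteq t$ and $t'(n)\notin A$ for all $n\in\mathrm{dom}(t')\setminus\mathrm{dom}(t)$. For $T,T'\in\mathbb{H}$, $T'\le_A T$ iff $T'\subseteq T$ and $\mathrm{Stem}(T')\sqsupseteq_A\mathrm{Stem}(T)$. *)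

theory Defs
  imports Main "HOL-Library.Sublist"
begin

text \<open>A transitive model of ZF is represented (up to Mostowski collapse) by a well-founded,
  extensional structure satisfying the ZF axioms; the separation and replacement schemas
  quantify over first-order formulas of the language of set theory.\<close>

datatype fm = Mem nat nat | Equ nat nat | Neg fm | Conj fm fm | Ex nat fm

primrec sat :: "('m \<Rightarrow> 'm \<Rightarrow> bool) \<Rightarrow> fm \<Rightarrow> (nat \<Rightarrow> 'm) \<Rightarrow> bool" where
  "sat E (Mem i j) env = E (env i) (env j)"
| "sat E (Equ i j) env = (env i = env j)"
| "sat E (Neg p) env = (\<not> sat E p env)"
| "sat E (Conj p q) env = (sat E p env \<and> sat E q env)"
| "sat E (Ex i p) env = (\<exists>x. sat E p (env(i := x)))"

definition transitive_ZF_model :: "('m \<Rightarrow> 'm \<Rightarrow> bool) \<Rightarrow> bool" where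
  "transitive_ZF_model E \<longleftrightarrow>
     wfP E
   \<and> (\<forall>x y. (\<forall>z. E z x \<longleftrightarrow> E z y) \<longrightarrow> x = y)
   \<and> (\<forall>x y. \<exists>z. E x z \<and> E y z)
   \<and> (\<forall>x. \<exists>u. \<forall>y z. E y x \<and> E z y \<longrightarrow> E z u)
   \<and> (\<forall>x. \<exists>p. \<forall>y. (\<forall>z. E z y \<longrightarrow> E z x) \<longrightarrow> E y p)
   \<and> (\<exists>w. (\<exists>e. E e w \<and> (\<forall>z. \<not> E z e))
          \<and> (\<forall>y. E y w \<longrightarrow> (\<exists>s. E s w \<and> (\<forall>z. E z s \<longleftrightarrow> E z y \<or> z = y))))
   \<and> (\<forall>\<phi> env i a. \<exists>b. \<forall>x. E x b \<longleftrightarrow> E x a \<and> sat E \<phi> (env(i := x)))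
   \<and> (\<forall>\<phi> env i j a. i \<noteq> j \<longrightarrow>
         (\<forall>x. E x a \<longrightarrow> (\<exists>!y. sat E \<phi> (env(i := x, j := y)))) \<longrightarrow>
         (\<exists>b. \<forall>x. E x a \<longrightarrow> (\<exists>y. E y b \<and> sat E \<phi> (env(i := x, j := y)))))"

primrec codes_nat :: "('m \<Rightarrow> 'm \<Rightarrow> bool) \<Rightarrow> 'm \<Rightarrow> nat \<Rightarrow> bool" where
  "codes_nat E x 0 = (\<forall>z. \<not> E z x)"
| "codes_nat E x (Suc n) = (\<exists>y. codes_nat E y n \<and> (\<forall>z. E z x \<longleftrightarrow> E z y \<or> z = y))"

definition is_pair :: "('m \<Rightarrow> 'm \<Rightarrow> bool) \<Rightarrow> 'm \<Rightarrow> 'm \<Rightarrow> 'm \<Rightarrow> bool" where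
  "is_pair E p a b \<longleftrightarrow>
     (\<forall>z. E z p \<longleftrightarrow> ((\<forall>w. E w z \<longleftrightarrow> w = a) \<or> (\<forall>w. E w z \<longleftrightarrow> w = a \<or> w = b)))"

text \<open>An element of \<omega>^{<\<omega>}: a function from a natural number n to \<omega>.\<close>
definition codes_seq :: "('m \<Rightarrow> 'm \<Rightarrow> bool) \<Rightarrow> 'm \<Rightarrow> nat list \<Rightarrow> bool" where
  "codes_seq E y l \<longleftrightarrow>
     (\<forall>p. E p y \<longleftrightarrow> (\<exists>i<length l. \<exists>a b. codes_nat E a i \<and> codes_nat E b (l ! i) \<and> is_pair E p a b))"

definition codes_natset :: "('m \<Rightarrow> 'm \<Rightarrow> bool) \<Rightarrow> 'm \<Rightarrow> nat set \<Rightarrow> bool" where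
  "codes_natset E x B \<longleftrightarrow> (\<forall>z. E z x \<longleftrightarrow> (\<exists>n\<in>B. codes_nat E z n))"

definition codes_tree :: "('m \<Rightarrow> 'm \<Rightarrow> bool) \<Rightarrow> 'm \<Rightarrow> nat list set \<Rightarrow> bool" where
  "codes_tree E t S \<longleftrightarrow> (\<forall>y. E y t \<longleftrightarrow> (\<exists>l\<in>S. codes_seq E y l))"

definition is_tree :: "nat list set \<Rightarrow> bool" where
  "is_tree T \<longleftrightarrow> T \<noteq> {} \<and> (\<forall>t\<in>T. \<forall>s. prefix s t \<longrightarrow> s \<in> T)"

definition is_stem :: "nat list set \<Rightarrow> nat list \<Rightarrow> bool" where
  "is_stem T s \<longleftrightarrow> s \<in> T \<and> (\<forall>t\<in>T. prefix s t \<or> prefix t s)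
     \<and> (\<forall>s'\<in>T. (\<forall>t\<in>T. prefix s' t \<or> prefix t s') \<longrightarrow> prefix s' s)"

definition stem :: "nat list set \<Rightarrow> nat list" where
  "stem T = (THE s. is_stem T s)"

definition hechler :: "nat list set set" where
  "hechler = {T. is_tree T \<and> (\<exists>s. is_stem T s \<and>
        (\<forall>t\<in>T. prefix s t \<longrightarrow> finite {z. t @ [z] \<notin> T}))}"

text \<open>H^M: the Hechler trees that belong to M (membership in H is absolute).\<close>
definition hechler_in :: "('m \<Rightarrow> 'm \<Rightarrow> bool) \<Rightarrow> nat list set set" where
  "hechler_in E = {T \<in> hechler. \<exists>t. codes_tree E t T}"

definition tree_members :: "('m \<Rightarrow> 'm \<Rightarrow> bool) \<Rightarrow> 'm \<Rightarrow> nat list set set" where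
  "tree_members E D = {T. \<exists>y. E y D \<and> codes_tree E y T}"

text \<open>D is (in M) an open dense subset of H^M, ordered by inclusion; these are
  Delta_0 properties in the parameter H^M, hence absolute for transitive M.\<close>
definition open_dense_in :: "('m \<Rightarrow> 'm \<Rightarrow> bool) \<Rightarrow> 'm \<Rightarrow> bool" where
  "open_dense_in E D \<longleftrightarrow>
     (\<forall>y. E y D \<longrightarrow> (\<exists>T\<in>hechler_in E. codes_tree E y T))
   \<and> (\<forall>T\<in>tree_members E D. \<forall>T'\<in>hechler_in E. T' \<subseteq> T \<longrightarrow> T' \<in> tree_members E D)
   \<and> (\<forall>T\<in>hechler_in E. \<exists>T'\<in>tree_members E D. T' \<subseteq> T)"

definition evasive :: "('m \<Rightarrow> 'm \<Rightarrow> bool) \<Rightarrow> nat set \<Rightarrow> bool" where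
  "evasive E A \<longleftrightarrow> infinite A \<and>
     \<not> (\<exists>x B. codes_natset E x B \<and> infinite B \<and> B \<subseteq> A)"

definition ext_A :: "nat set \<Rightarrow> nat list \<Rightarrow> nat list \<Rightarrow> bool" where
  "ext_A A t t' \<longleftrightarrow> prefix t t' \<and> (\<forall>n. length t \<le> n \<and> n < length t' \<longrightarrow> t' ! n \<notin> A)"

definition le_A :: "nat set \<Rightarrow> nat list set \<Rightarrow> nat list set \<Rightarrow> bool" where
  "le_A A T' T \<longleftrightarrow> T' \<subseteq> T \<and> ext_A A (stem T) (stem T')"

end

theory Submission
  imports Defs "HOL-Library.Infinite_Set"
begin


definition FOr :: "fm \<Rightarrow> fm \<Rightarrow> fm" where "FOr p q = Neg (Conj (Neg p) (Neg q))"
definition FImp :: "fm \<Rightarrow> fm \<Rightarrow> fm" where "FImp p q = Neg (Conj p (Neg q))"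
definition FIff :: "fm \<Rightarrow> fm \<Rightarrow> fm" where "FIff p q = Conj (FImp p q) (FImp q p)"
definition FAll :: "nat \<Rightarrow> fm \<Rightarrow> fm" where "FAll i p = Neg (Ex i (Neg p))"

lemma sat_Or[simp]: "sat E (FOr p q) env = (sat E p env \<or> sat E q env)" by (simp add: FOr_def)
lemma sat_Imp[simp]: "sat E (FImp p q) env = (sat E p env \<longrightarrow> sat E q env)" by (simp add: FImp_def)
lemma sat_Iff[simp]: "sat E (FIff p q) env = (sat E p env \<longleftrightarrow> sat E q env)" by (auto simp add: FIff_def)
lemma sat_All[simp]: "sat E (FAll i p) env = (\<forall>x. sat E (p) (env(i:=x)))" by (simp add: FAll_def)

lemma upd_less[simp]: "(x::nat) < n \<Longrightarrow> (f(n:=v)) x = f x" by (subst fun_upd_other) auto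
lemma upd_less1[simp]: "(x::nat) < n \<Longrightarrow> (f(n+1:=v)) x = f x" by (subst fun_upd_other) auto
lemma upd_less2[simp]: "(x::nat) < n \<Longrightarrow> (f(n+2:=v)) x = f x" by (subst fun_upd_other) auto
lemma upd_less3[simp]: "(x::nat) < n \<Longrightarrow> (f(n+3:=v)) x = f x" by (subst fun_upd_other) auto
lemma upd_less4[simp]: "(x::nat) < n \<Longrightarrow> (f(n+4:=v)) x = f x" by (subst fun_upd_other) auto

definition subE :: "('m \<Rightarrow> 'm \<Rightarrow> bool) \<Rightarrow> 'm \<Rightarrow> 'm \<Rightarrow> bool" where
  "subE E a b \<longleftrightarrow> (\<forall>w. E w a \<longrightarrow> E w b)"
definition cmpE where "cmpE E a b \<longleftrightarrow> subE E a b \<or> subE E b a"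
definition goodE where "goodE E Dm Tm t \<longleftrightarrow> (\<exists>d. E d Dm \<and> subE E d Tm \<and> E t d \<and> (\<forall>u. E u d \<longrightarrow> cmpE E u t)
   \<and> (\<forall>v. E v d \<longrightarrow> (\<forall>u. E u d \<longrightarrow> cmpE E u v) \<longrightarrow> subE E v t))"
definition succE where "succE E u u' \<longleftrightarrow> subE E u u' \<and> (\<exists>p. E p u' \<and> \<not> E p u \<and> (\<forall>q. E q u' \<longrightarrow> \<not> E q u \<longrightarrow> q = p))"
definition valE where "valE E u u' z \<longleftrightarrow> (\<exists>p. E p u' \<and> \<not> E p u \<and> (\<exists>a. is_pair E p a z))"
definition inRE where "inRE E v b R \<longleftrightarrow> (\<exists>p. E p R \<and> is_pair E p v b)"
definition lowerE where "lowerE E v b R \<longleftrightarrow> (\<exists>g. E g b \<and> inRE E v g R)"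
definition unbE where "unbE E Tm u b R \<longleftrightarrow> (\<forall>u1. E u1 Tm \<and> succE E u u1 \<longrightarrow> (\<exists>u2. E u2 Tm \<and> succE E u u2 \<and> lowerE E u2 b R
    \<and> (\<exists>z1 z2. valE E u u1 z1 \<and> valE E u u2 z2 \<and> E z1 z2)))"
definition witE where "witE E Dm Tm R \<longleftrightarrow> (\<forall>p. E p R \<longrightarrow> (\<exists>u b. is_pair E p u b \<and> E u Tm \<and> (goodE E Dm Tm u \<or> unbE E Tm u b R)))"
definition ordE where "ordE E a \<longleftrightarrow> (\<forall>y. E y a \<longrightarrow> (\<forall>w. E w y \<longrightarrow> E w a)) \<and> (\<forall>y. E y a \<longrightarrow> (\<forall>w. E w y \<longrightarrow> (\<forall>w'. E w' w \<longrightarrow> E w' y)))"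
definition witBE where "witBE E Dm Tm v a \<longleftrightarrow> (\<exists>R. witE E Dm Tm R \<and> (\<forall>p. E p R \<longrightarrow> (\<exists>u b. is_pair E p u b \<and> E b a)) \<and> (\<exists>b. inRE E v b R))"
definition hwE where "hwE E Dm Tm v \<longleftrightarrow> (\<exists>a. ordE E a \<and> witBE E Dm Tm v a)"
definition leastE where "leastE E Dm Tm v a \<longleftrightarrow> ordE E a \<and> witBE E Dm Tm v a \<and> (\<forall>a'. E a' a \<longrightarrow> \<not> witBE E Dm Tm v a')"

definition fsub where "fsub x y n = FAll n (FImp (Mem n x) (Mem n y))"
definition fcmp where "fcmp x y n = FOr (fsub x y n) (fsub y x n)"
definition fpair where "fpair p a b n = FAll n (FIff (Mem n p) (FOr (FAll (n+1) (FIff (Mem (n+1) n) (Equ (n+1) a)))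
   (FAll (n+1) (FIff (Mem (n+1) n) (FOr (Equ (n+1) a) (Equ (n+1) b))))))"
definition fgood where "fgood t D T n = Ex n (Conj (Mem n D) (Conj (fsub n T (n+1)) (Conj (Mem t n)
  (Conj (FAll (n+1) (FImp (Mem (n+1) n) (fcmp (n+1) t (n+2))))
   (FAll (n+1) (FImp (Mem (n+1) n) (FImp (FAll (n+2) (FImp (Mem (n+2) n) (fcmp (n+2) (n+1) (n+3)))) (fsub (n+1) t (n+2)))))))))"
definition fsucc where "fsucc u u' n = Conj (fsub u u' n) (Ex n (Conj (Mem n u') (Conj (Neg (Mem n u))
   (FAll (n+1) (FImp (Mem (n+1) u') (FImp (Neg (Mem (n+1) u)) (Equ (n+1) n)))))))"
definition fval where "fval u u' z n = Ex n (Conj (Mem n u') (Conj (Neg (Mem n u)) (Ex (n+1) (fpair n (n+1) z (n+2)))))"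
definition finR where "finR v b R n = Ex n (Conj (Mem n R) (fpair n v b (n+1)))"
definition flower where "flower v b R n = Ex n (Conj (Mem n b) (finR v n R (n+1)))"
definition funb where "funb T u b R n = FAll n (FImp (Conj (Mem n T) (fsucc u n (n+1))) (Ex (n+1) (Conj (Mem (n+1) T)
   (Conj (fsucc u (n+1) (n+2)) (Conj (flower (n+1) b R (n+2))
   (Ex (n+2) (Ex (n+3) (Conj (fval u n (n+2) (n+4)) (Conj (fval u (n+1) (n+3) (n+4)) (Mem (n+2) (n+3)))))))))))"
definition fwit where "fwit D T R n = FAll n (FImp (Mem n R) (Ex (n+1) (Ex (n+2) (Conj (fpair n (n+1) (n+2) (n+3))
   (Conj (Mem (n+1) T) (FOr (fgood (n+1) D T (n+3)) (funb T (n+1) (n+2) R (n+3))))))))"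
definition ford where "ford a n = FAll n (FImp (Mem n a) (Conj (FAll (n+1) (FImp (Mem (n+1) n) (Mem (n+1) a)))
   (FAll (n+1) (FImp (Mem (n+1) n) (FAll (n+2) (FImp (Mem (n+2) (n+1)) (Mem (n+2) n)))))))"
definition fwitB where "fwitB D T v a n = Ex n (Conj (fwit D T n (n+1)) (Conj (FAll (n+1) (FImp (Mem (n+1) n)
   (Ex (n+2) (Ex (n+3) (Conj (fpair (n+1) (n+2) (n+3) (n+4)) (Mem (n+3) a)))))) (Ex (n+1) (finR v (n+1) n (n+2)))))"
definition fhw where "fhw D T v n = Ex n (Conj (ford n (n+1)) (fwitB D T v n (n+1)))"
definition fleast where "fleast D T v a n = Conj (ford a n) (Conj (fwitB D T v a n) (FAll n (FImp (Mem n a) (Neg (fwitB D T v n (n+1))))))"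

lemma sat_fsub[simp]: "x < n \<Longrightarrow> y < n \<Longrightarrow> sat E (fsub x y n) env \<longleftrightarrow> subE E (env x) (env y)"
  by (simp add: fsub_def subE_def)
lemma sat_fcmp[simp]: "x < n \<Longrightarrow> y < n \<Longrightarrow> sat E (fcmp x y n) env \<longleftrightarrow> cmpE E (env x) (env y)"
  by (simp add: fcmp_def cmpE_def)
lemma sat_fpair[simp]: "p < n \<Longrightarrow> a < n \<Longrightarrow> b < n \<Longrightarrow> sat E (fpair p a b n) env \<longleftrightarrow> is_pair E (env p) (env a) (env b)"
  by (simp add: fpair_def is_pair_def)
lemma sat_fgood[simp]: "t < n \<Longrightarrow> D < n \<Longrightarrow> T < n \<Longrightarrow> sat E (fgood t D T n) env \<longleftrightarrow> goodE E (env D) (env T) (env t)"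
  by (simp add: fgood_def goodE_def)
lemma sat_fsucc[simp]: "u < n \<Longrightarrow> u' < n \<Longrightarrow> sat E (fsucc u u' n) env \<longleftrightarrow> succE E (env u) (env u')"
  by (simp add: fsucc_def succE_def)
lemma sat_fval[simp]: "u < n \<Longrightarrow> u' < n \<Longrightarrow> z < n \<Longrightarrow> sat E (fval u u' z n) env \<longleftrightarrow> valE E (env u) (env u') (env z)"
  by (simp add: fval_def valE_def)
lemma sat_finR[simp]: "v < n \<Longrightarrow> b < n \<Longrightarrow> R < n \<Longrightarrow> sat E (finR v b R n) env \<longleftrightarrow> inRE E (env v) (env b) (env R)"
  by (simp add: finR_def inRE_def)
lemma sat_flower[simp]: "v < n \<Longrightarrow> b < n \<Longrightarrow> R < n \<Longrightarrow> sat E (flower v b R n) env \<longleftrightarrow> lowerE E (env v) (env b) (env R)"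
  by (simp add: flower_def lowerE_def)
lemma sat_funb[simp]: "T < n \<Longrightarrow> u < n \<Longrightarrow> b < n \<Longrightarrow> R < n \<Longrightarrow> sat E (funb T u b R n) env \<longleftrightarrow> unbE E (env T) (env u) (env b) (env R)"
  by (simp add: funb_def unbE_def)
lemma sat_fwit[simp]: "D < n \<Longrightarrow> T < n \<Longrightarrow> R < n \<Longrightarrow> sat E (fwit D T R n) env \<longleftrightarrow> witE E (env D) (env T) (env R)"
  by (simp add: fwit_def witE_def)
lemma sat_ford[simp]: "a < n \<Longrightarrow> sat E (ford a n) env \<longleftrightarrow> ordE E (env a)"
  by (simp add: ford_def ordE_def imp_conjR all_conj_distrib)
lemma sat_fwitB[simp]: "D < n \<Longrightarrow> T < n \<Longrightarrow> v < n \<Longrightarrow> a < n \<Longrightarrow> sat E (fwitB D T v a n) env \<longleftrightarrow> witBE E (env D) (env T) (env v) (env a)"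
  by (simp add: fwitB_def witBE_def)
lemma sat_fhw[simp]: "D < n \<Longrightarrow> T < n \<Longrightarrow> v < n \<Longrightarrow> sat E (fhw D T v n) env \<longleftrightarrow> hwE E (env D) (env T) (env v)"
  by (simp add: fhw_def hwE_def)
lemma sat_fleast[simp]: "D < n \<Longrightarrow> T < n \<Longrightarrow> v < n \<Longrightarrow> a < n \<Longrightarrow> sat E (fleast D T v a n) env \<longleftrightarrow> leastE E (env D) (env T) (env v) (env a)"
  by (simp add: fleast_def leastE_def)




locale zfm = fixes E :: "'m \<Rightarrow> 'm \<Rightarrow> bool" assumes M: "transitive_ZF_model E"
begin

lemmas H = M[unfolded transitive_ZF_model_def]
lemma wf: "wfP E" using H by (rule conjunct1)
lemma ax_ext: "\<forall>x y. (\<forall>z. E z x \<longleftrightarrow> E z y) \<longrightarrow> x = y" using H by (elim conjE)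
lemma ax_pair: "\<forall>x y. \<exists>z. E x z \<and> E y z" using H by (elim conjE)
lemma ax_union: "\<forall>x. \<exists>u. \<forall>y z. E y x \<and> E z y \<longrightarrow> E z u" using H by (elim conjE)
lemma ax_pow: "\<forall>x. \<exists>p. \<forall>y. (\<forall>z. E z y \<longrightarrow> E z x) \<longrightarrow> E y p" using H by (elim conjE)
lemma ax_sep: "\<forall>\<phi> env i a. \<exists>b. \<forall>x. E x b \<longleftrightarrow> E x a \<and> sat E \<phi> (env(i := x))" using H by (elim conjE)
lemma ax_repl: "\<forall>\<phi> env i j a. i \<noteq> j \<longrightarrow>
         (\<forall>x. E x a \<longrightarrow> (\<exists>!y. sat E \<phi> (env(i := x, j := y)))) \<longrightarrow>
         (\<exists>b. \<forall>x. E x a \<longrightarrow> (\<exists>y. E y b \<and> sat E \<phi> (env(i := x, j := y))))" using H by (elim conjE)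

lemma ext: "(\<And>z. E z x \<longleftrightarrow> E z y) \<Longrightarrow> x = y" using ax_ext by blast

lemma sep: assumes "\<And>x. sat E \<phi> (env(i:=x)) = P x" shows "\<exists>b. \<forall>x. E x b \<longleftrightarrow> E x a \<and> P x"
proof -
  from ax_sep have "\<exists>b. \<forall>x. E x b \<longleftrightarrow> E x a \<and> sat E \<phi> (env(i := x))" by blast
  then show ?thesis using assms by simp
qed

lemma repl: assumes "i \<noteq> j" "\<And>x y. sat E \<phi> (env(i:=x, j:=y)) = P x y" "\<forall>x. E x a \<longrightarrow> (\<exists>!y. P x y)"
  shows "\<exists>b. \<forall>x. E x a \<longrightarrow> (\<exists>y. E y b \<and> P x y)"
proof -
  have "(\<forall>x. E x a \<longrightarrow> (\<exists>!y. sat E \<phi> (env(i := x, j := y)))) \<longrightarrow>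
         (\<exists>b. \<forall>x. E x a \<longrightarrow> (\<exists>y. E y b \<and> sat E \<phi> (env(i := x, j := y))))" using ax_repl assms(1) by blast
  then show ?thesis using assms(2,3) by simp
qed

lemma irrefl: "\<not> E x x"
  using wfp_imp_asymp[OF wf] by (meson asympD)

lemma asym: "E x y \<Longrightarrow> \<not> E y x"
  using wfp_imp_asymp[OF wf] by (meson asympD)

lemma empty_ex: "\<exists>e. \<forall>z. \<not> E z e"
proof -
  obtain b where "\<forall>x. E x b \<longleftrightarrow> E x b \<and> False"
    using sep[of "Neg (Equ 0 0)" "\<lambda>_. b" 0 "\<lambda>_. False" b] by auto
  then show ?thesis by blast
qed

lemma upair_ex: "\<exists>c. \<forall>x. E x c \<longleftrightarrow> x = a \<or> x = b"
proof -
  from ax_pair obtain z where z: "E a z" "E b z" by blast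
  obtain c where "\<forall>x. E x c \<longleftrightarrow> E x z \<and> (x = a \<or> x = b)"
    using sep[of "FOr (Equ 0 1) (Equ 0 2)" "(\<lambda>_. a)(1:=a, 2:=b)" 0 "\<lambda>x. x = a \<or> x = b" z] by auto
  then show ?thesis using z by blast
qed

lemma union_ex: "\<exists>u. \<forall>x. E x u \<longleftrightarrow> (\<exists>y. E y a \<and> E x y)"
proof -
  from ax_union obtain u0 where u0: "\<forall>y z. E y a \<and> E z y \<longrightarrow> E z u0" by blast
  obtain c where "\<forall>x. E x c \<longleftrightarrow> E x u0 \<and> (\<exists>y. E y a \<and> E x y)"
    using sep[of "Ex 1 (Conj (Mem 1 2) (Mem 0 1))" "(\<lambda>_. a)(2:=a)" 0 "\<lambda>x. \<exists>y. E y a \<and> E x y" u0] by auto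
  then show ?thesis using u0 by blast
qed

lemma un_ex: "\<exists>c. \<forall>x. E x c \<longleftrightarrow> E x a \<or> E x b"
proof -
  obtain p where p: "\<forall>x. E x p \<longleftrightarrow> x = a \<or> x = b" using upair_ex by blast
  obtain u where u: "\<forall>x. E x u \<longleftrightarrow> (\<exists>y. E y p \<and> E x y)" using union_ex by blast
  show ?thesis apply (rule exI[of _ u]) using u p by auto
qed

lemma pow_ex: "\<exists>p. \<forall>y. subE E y x \<longrightarrow> E y p"
  using ax_pow unfolding subE_def by blast

lemma pair_ex: "\<exists>p. is_pair E p a b"
proof -
  obtain s where s: "\<forall>x. E x s \<longleftrightarrow> x = a \<or> x = a" using upair_ex by blast
  obtain t where t: "\<forall>x. E x t \<longleftrightarrow> x = a \<or> x = b" using upair_ex by blast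
  obtain p where p: "\<forall>x. E x p \<longleftrightarrow> x = s \<or> x = t" using upair_ex by blast
  have "is_pair E p a b" unfolding is_pair_def
  proof (intro allI iffI)
    fix z assume "E z p" then show "(\<forall>w. E w z = (w = a)) \<or> (\<forall>w. E w z = (w = a \<or> w = b))"
      using p s t by auto
  next
    fix z assume "(\<forall>w. E w z = (w = a)) \<or> (\<forall>w. E w z = (w = a \<or> w = b))"
    then have "z = s \<or> z = t" using s t ext by (metis)
    then show "E z p" using p by auto
  qed
  then show ?thesis by blast
qed

lemma pair_inj: assumes "is_pair E p a b" "is_pair E p a' b'" shows "a = a' \<and> b = b'"
proof -
  obtain s where s: "\<forall>x. E x s \<longleftrightarrow> x = a" using upair_ex[of a a] by auto
  obtain t where t: "\<forall>x. E x t \<longleftrightarrow> x = a \<or> x = b" using upair_ex by blast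
  obtain t' where t': "\<forall>x. E x t' \<longleftrightarrow> x = a' \<or> x = b'" using upair_ex by blast
  have "E s p" using assms(1) s unfolding is_pair_def by blast
  then have "(\<forall>w. E w s = (w = a')) \<or> (\<forall>w. E w s = (w = a' \<or> w = b'))" using assms(2) unfolding is_pair_def by blast
  then have aa: "a = a'" using s by blast
  have "E t p" using assms(1) t unfolding is_pair_def by blast
  then have 1: "(\<forall>w. E w t = (w = a')) \<or> (\<forall>w. E w t = (w = a' \<or> w = b'))" using assms(2) unfolding is_pair_def by blast
  have "E t' p" using assms(2) t' unfolding is_pair_def by blast
  then have 2: "(\<forall>w. E w t' = (w = a)) \<or> (\<forall>w. E w t' = (w = a \<or> w = b))" using assms(1) unfolding is_pair_def by blast
  from 1 2 t t' aa have "b = b'" by metis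
  with aa show ?thesis by simp
qed

lemma pair_uniq: assumes "is_pair E p a b" "is_pair E q a b" shows "p = q"
  using assms unfolding is_pair_def by (intro ext) blast

end



context zfm begin

lemma nat_uniq: "codes_nat E x n \<Longrightarrow> codes_nat E y n \<Longrightarrow> x = y"
proof (induction n arbitrary: x y)
  case 0 then show ?case by (intro ext) simp
next
  case (Suc n)
  from Suc.prems obtain x0 y0 where "codes_nat E x0 n" "\<forall>z. E z x \<longleftrightarrow> E z x0 \<or> z = x0"
     "codes_nat E y0 n" "\<forall>z. E z y \<longleftrightarrow> E z y0 \<or> z = y0" by auto
  with Suc.IH[of x0 y0] show ?case by (intro ext) auto
qed

lemma nat_members: "codes_nat E x n \<Longrightarrow> E y x \<longleftrightarrow> (\<exists>m<n. codes_nat E y m)"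
proof (induction n arbitrary: x)
  case 0 then show ?case by simp
next
  case (Suc n)
  from Suc.prems obtain x0 where x0: "codes_nat E x0 n" "\<forall>z. E z x \<longleftrightarrow> E z x0 \<or> z = x0" by auto
  have "E y x \<longleftrightarrow> (\<exists>m<n. codes_nat E y m) \<or> y = x0" using x0 Suc.IH by auto
  also have "\<dots> \<longleftrightarrow> (\<exists>m<Suc n. codes_nat E y m)"
    using x0(1) nat_uniq less_Suc_eq by metis
  finally show ?case .
qed

lemma nat_inj: "codes_nat E x n \<Longrightarrow> codes_nat E x m \<Longrightarrow> n = m"
  by (metis irrefl linorder_neqE_nat nat_members)

lemma nat_less: "codes_nat E x m \<Longrightarrow> codes_nat E y n \<Longrightarrow> E x y \<longleftrightarrow> m < n"
  by (metis nat_inj nat_members)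

lemma nat_ex: "\<exists>x. codes_nat E x n"
proof (induction n)
  case 0 then show ?case using empty_ex by simp
next
  case (Suc n)
  then obtain x where x: "codes_nat E x n" by blast
  obtain s where s: "\<forall>z. E z s \<longleftrightarrow> z = x \<or> z = x" using upair_ex by blast
  obtain c where c: "\<forall>z. E z c \<longleftrightarrow> E z x \<or> E z s" using un_ex by blast
  have "codes_nat E c (Suc n)" using x s c by auto
  then show ?case by blast
qed

lemma pos_notin: assumes "codes_seq E y l" "codes_nat E a (length l)" "is_pair E p a b" shows "\<not> E p y"
proof
  assume "E p y"
  then obtain i a' b' where "i < length l" "codes_nat E a' i" "is_pair E p a' b'"
    using assms(1) unfolding codes_seq_def by blast
  then show False using assms(2,3) pair_inj nat_inj by (metis less_irrefl)
qed

lemma seq_ex: "\<exists>y. codes_seq E y l"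
proof (induction l rule: rev_induct)
  case Nil
  obtain e where "\<forall>z. \<not> E z e" using empty_ex by blast
  then have "codes_seq E e []" unfolding codes_seq_def by simp
  then show ?case by blast
next
  case (snoc z l)
  then obtain y where y: "codes_seq E y l" by blast
  obtain a where a: "codes_nat E a (length l)" using nat_ex by blast
  obtain b where b: "codes_nat E b z" using nat_ex by blast
  obtain p where p: "is_pair E p a b" using pair_ex by blast
  obtain s where s: "\<forall>q. E q s \<longleftrightarrow> q = p \<or> q = p" using upair_ex by blast
  obtain c where c: "\<forall>q. E q c \<longleftrightarrow> E q y \<or> E q s" using un_ex by blast
  have "codes_seq E c (l @ [z])" unfolding codes_seq_def
  proof (intro allI iffI)
    fix q assume "E q c"
    then have "E q y \<or> q = p" using c s by auto
    then show "\<exists>i<length (l @ [z]). \<exists>a b. codes_nat E a i \<and> codes_nat E b ((l @ [z]) ! i) \<and> is_pair E q a b"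
    proof
      assume "E q y"
      then obtain i a b where "i<length l" "codes_nat E a i" "codes_nat E b (l ! i)" "is_pair E q a b"
        using y unfolding codes_seq_def by blast
      then show ?thesis by (intro exI[of _ i]) (auto simp: nth_append)
    next
      assume "q = p" then show ?thesis using a b p by (intro exI[of _ "length l"]) auto
    qed
  next
    fix q assume "\<exists>i<length (l @ [z]). \<exists>a b. codes_nat E a i \<and> codes_nat E b ((l @ [z]) ! i) \<and> is_pair E q a b"
    then obtain i a' b' where i: "i < Suc (length l)" "codes_nat E a' i" "codes_nat E b' ((l @ [z]) ! i)" "is_pair E q a' b'" by auto
    show "E q c"
    proof (cases "i < length l")
      case True
      then have "E q y" using y i unfolding codes_seq_def by (auto simp: nth_append)
      then show ?thesis using c by auto
    next
      case False
      then have "i = length l" using i by simp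
      then have "a' = a" "b' = b" using i a b nat_uniq by auto
      then have "q = p" using i p pair_uniq by auto
      then show ?thesis using c s by auto
    qed
  qed
  then show ?case by blast
qed

lemma seq_uniq: "codes_seq E y l \<Longrightarrow> codes_seq E y' l \<Longrightarrow> y = y'"
  unfolding codes_seq_def by (intro ext) auto

lemma seq_mem: assumes "codes_seq E y l" "i < length l" "codes_nat E a i" "codes_nat E b (l!i)" "is_pair E p a b"
  shows "E p y" using assms unfolding codes_seq_def by blast

lemma seq_mem_inv: assumes "codes_seq E y l" "E p y"
  obtains i a b where "i < length l" "codes_nat E a i" "codes_nat E b (l!i)" "is_pair E p a b"
  using assms unfolding codes_seq_def by blast

lemma seq_sub: assumes y: "codes_seq E y l" and y': "codes_seq E y' l'" shows "subE E y y' \<longleftrightarrow> prefix l l'"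
proof
  assume sub: "subE E y y'"
  have agree: "i < length l' \<and> l ! i = l' ! i" if "i < length l" for i
  proof -
    obtain a where a: "codes_nat E a i" using nat_ex by blast
    obtain b where b: "codes_nat E b (l!i)" using nat_ex by blast
    obtain p where p: "is_pair E p a b" using pair_ex by blast
    have "E p y" using seq_mem[OF y that a b p] .
    then have "E p y'" using sub unfolding subE_def by blast
    then obtain j a' b' where j: "j < length l'" "codes_nat E a' j" "codes_nat E b' (l'!j)" "is_pair E p a' b'"
      by (rule seq_mem_inv[OF y'])
    then have "a = a'" "b = b'" using pair_inj p by auto
    then have "i = j" "l!i = l'!j" using a b j nat_inj by auto
    then show ?thesis using j by simp
  qed
  then have len: "length l \<le> length l'" by (metis leI less_irrefl)
  have "l = take (length l) l'"
    by (rule nth_equalityI) (use agree len in auto)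
  then show "prefix l l'" by (metis take_is_prefix)
next
  assume "prefix l l'"
  then obtain zs where zs: "l' = l @ zs" by (auto simp: prefix_def)
  show "subE E y y'" unfolding subE_def
  proof (intro allI impI)
    fix p assume "E p y"
    then obtain i a b where "i < length l" "codes_nat E a i" "codes_nat E b (l!i)" "is_pair E p a b"
      by (rule seq_mem_inv[OF y])
    then show "E p y'" using seq_mem[OF y', of i a b p] zs by (auto simp: nth_append)
  qed
qed

lemma seq_dec: "codes_seq E y l \<Longrightarrow> codes_seq E y l' \<Longrightarrow> l = l'"
  using seq_sub[of y l y l'] seq_sub[of y l' y l] by (auto simp: subE_def intro: prefix_order.antisym)

lemma tree_mem: "codes_tree E t S \<Longrightarrow> codes_seq E y l \<Longrightarrow> E y t \<longleftrightarrow> l \<in> S"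
  unfolding codes_tree_def using seq_dec by blast

lemma tree_dec: "codes_tree E t S \<Longrightarrow> codes_tree E t S' \<Longrightarrow> S = S'"
  using tree_mem seq_ex by blast

end



context zfm begin

lemma new_pair: assumes y: "codes_seq E y l" and y': "codes_seq E y' (l @ [z])"
  shows "\<exists>a b p. codes_nat E a (length l) \<and> codes_nat E b z \<and> is_pair E p a b \<and> E p y' \<and> \<not> E p y
    \<and> (\<forall>q. E q y' \<longrightarrow> \<not> E q y \<longrightarrow> q = p)"
proof -
  obtain a where a: "codes_nat E a (length l)" using nat_ex by blast
  obtain b where b: "codes_nat E b z" using nat_ex by blast
  obtain p where p: "is_pair E p a b" using pair_ex by blast
  have "E p y'" using seq_mem[OF y', of "length l" a b p] a b p by simp
  moreover have "\<not> E p y" using pos_notin[OF y a p] .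
  moreover have "q = p" if qq: "E q y'" "\<not> E q y" for q
  proof -
    obtain i a' b' where i: "i < length (l@[z])" "codes_nat E a' i" "codes_nat E b' ((l@[z])!i)" "is_pair E q a' b'"
      by (rule seq_mem_inv[OF y' qq(1)])
    show ?thesis
    proof (cases "i < length l")
      case True
      then have "E q y" using seq_mem[OF y True i(2) _ i(4)] i(3) by (simp add: nth_append)
      then show ?thesis using qq by simp
    next
      case False
      then have "i = length l" using i by simp
      then have "codes_nat E a' (length l)" "codes_nat E b' z" using i by auto
      then have "a' = a" "b' = b" using nat_uniq[OF _ a] nat_uniq[OF _ b] by auto
      then show ?thesis using pair_uniq[OF _ p, of q] i(4) by simp
    qed
  qed
  ultimately show ?thesis using a b p by blast
qed

lemma succ_char: assumes y: "codes_seq E y l" and y': "codes_seq E y' l'"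
  shows "succE E y y' \<longleftrightarrow> (\<exists>z. l' = l @ [z])"
proof
  assume s: "succE E y y'"
  then have "prefix l l'" using seq_sub[OF y y'] unfolding succE_def by blast
  then obtain zs where zs: "l' = l @ zs" by (auto simp: prefix_def)
  from s obtain p where p: "E p y'" "\<not> E p y" "\<And>q. E q y' \<Longrightarrow> \<not> E q y \<Longrightarrow> q = p" unfolding succE_def by blast
  have "zs \<noteq> []"
  proof
    assume "zs = []"
    then have "codes_seq E y' l" using y' zs by simp
    then have "y' = y" using seq_uniq y by blast
    then show False using p by simp
  qed
  moreover have "length zs < 2"
  proof (rule ccontr)
    assume "\<not> length zs < 2"
    then have l2: "length l < length l'" "Suc (length l) < length l'" using zs by auto
    obtain a1 where a1: "codes_nat E a1 (length l)" using nat_ex by blast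
    obtain b1 where b1: "codes_nat E b1 (l'!length l)" using nat_ex by blast
    obtain p1 where p1: "is_pair E p1 a1 b1" using pair_ex by blast
    obtain a2 where a2: "codes_nat E a2 (Suc (length l))" using nat_ex by blast
    obtain b2 where b2: "codes_nat E b2 (l'!Suc (length l))" using nat_ex by blast
    obtain p2 where p2: "is_pair E p2 a2 b2" using pair_ex by blast
    have "E p1 y'" "E p2 y'" using seq_mem[OF y' l2(1) a1 b1 p1] seq_mem[OF y' l2(2) a2 b2 p2] by auto
    moreover have "\<not> E p1 y" using pos_notin[OF y a1 p1] .
    moreover have "\<not> E p2 y"
    proof
      assume "E p2 y"
      then obtain i a b where "i < length l" "codes_nat E a i" "is_pair E p2 a b" by (rule seq_mem_inv[OF y])
      then have "a = a2" using pair_inj[OF \<open>is_pair E p2 a b\<close> p2] by simp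
      then have "i = Suc (length l)" using nat_inj[of a i "Suc (length l)"] a2 \<open>codes_nat E a i\<close> by simp
      then show False using \<open>i < length l\<close> by simp
    qed
    ultimately have "p1 = p" "p2 = p" using p(3) by blast+
    then have "p1 = p2" by simp
    then have "is_pair E p1 a2 b2" using p2 by simp
    then have "a1 = a2" using pair_inj[OF p1 \<open>is_pair E p1 a2 b2\<close>] by simp
    then have "codes_nat E a1 (Suc (length l))" using a2 by simp
    then have "length l = Suc (length l)" using nat_inj[OF a1 \<open>codes_nat E a1 (Suc (length l))\<close>] by simp
    then show False by simp
  qed
  ultimately obtain z where "zs = [z]" by (cases zs) (auto simp: length_Suc_conv)
  then show "\<exists>z. l' = l @ [z]" using zs by blast
next
  assume "\<exists>z. l' = l @ [z]"
  then obtain z where z: "l' = l @ [z]" by blast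
  have "subE E y y'" using seq_sub[OF y y'] z by simp
  moreover obtain p where "E p y'" "\<not> E p y" "\<forall>q. E q y' \<longrightarrow> \<not> E q y \<longrightarrow> q = p"
    using new_pair[OF y y'[unfolded z]] by blast
  ultimately show "succE E y y'" unfolding succE_def by blast
qed

lemma val_char: assumes y: "codes_seq E y l" and y': "codes_seq E y' (l @ [z])"
  shows "valE E y y' x \<longleftrightarrow> codes_nat E x z"
proof -
  obtain a b p where abp: "codes_nat E a (length l)" "codes_nat E b z" "is_pair E p a b" "E p y'" "\<not> E p y"
    "\<forall>q. E q y' \<longrightarrow> \<not> E q y \<longrightarrow> q = p" using new_pair[OF y y'] by blast
  show ?thesis
  proof
    assume "valE E y y' x"
    then obtain q a' where "E q y'" "\<not> E q y" "is_pair E q a' x" unfolding valE_def by blast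
    then have "q = p" using abp(6) by blast
    then have "is_pair E p a' x" using \<open>is_pair E q a' x\<close> by simp
    then have "x = b" using pair_inj[OF abp(3) \<open>is_pair E p a' x\<close>] by simp
    then show "codes_nat E x z" using abp(2) by simp
  next
    assume "codes_nat E x z"
    then have "x = b" using nat_uniq[OF \<open>codes_nat E x z\<close> abp(2)] by simp
    then show "valE E y y' x" unfolding valE_def using abp(3,4,5) by blast
  qed
qed

end



lemma is_stem_unique: "is_stem T s \<Longrightarrow> is_stem T s' \<Longrightarrow> s = s'"
  unfolding is_stem_def by (meson prefix_order.antisym)

lemma stem_eq: "is_stem T s \<Longrightarrow> stem T = s"
  unfolding stem_def using is_stem_unique by blast

lemma hechlerD: assumes "T \<in> hechler"
  shows "is_tree T" "is_stem T (stem T)" "\<And>t. t \<in> T \<Longrightarrow> prefix (stem T) t \<Longrightarrow> finite {z. t@[z] \<notin> T}"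
proof -
  from assms obtain s where s: "is_tree T" "is_stem T s" "\<forall>t\<in>T. prefix s t \<longrightarrow> finite {z. t @ [z] \<notin> T}"
    unfolding hechler_def by blast
  then have "stem T = s" using stem_eq by blast
  then show "is_tree T" "is_stem T (stem T)" "\<And>t. t \<in> T \<Longrightarrow> prefix (stem T) t \<Longrightarrow> finite {z. t@[z] \<notin> T}"
    using s by auto
qed

lemma succ_inf: assumes "T \<in> hechler" "t \<in> T" "prefix (stem T) t" shows "infinite {z. t@[z] \<in> T}"
proof
  assume "finite {z. t@[z] \<in> T}"
  moreover have "finite {z. t@[z] \<notin> T}" using hechlerD(3)[OF assms] .
  ultimately have "finite ({z. t@[z] \<in> T} \<union> {z. t@[z] \<notin> T})" by simp
  moreover have "{z. t@[z] \<in> T} \<union> {z. t@[z] \<notin> T} = (UNIV :: nat set)" by auto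
  ultimately show False by simp
qed

lemma stem_in: "T \<in> hechler \<Longrightarrow> stem T \<in> T"
  using hechlerD(2) is_stem_def by blast

lemma stem_cmp: "T \<in> hechler \<Longrightarrow> t \<in> T \<Longrightarrow> prefix (stem T) t \<or> prefix t (stem T)"
  using hechlerD(2) is_stem_def by blast

lemma prefix_snoc_cases: "prefix m (u @ [z]) \<Longrightarrow> m = u @ [z] \<or> prefix m u"
  by (metis prefix_snoc)

lemma Tstar_hechler:
  fixes Q :: "nat list \<Rightarrow> bool"
  assumes H: "T \<in> hechler" and st: "stem T = s" and nQ: "\<not> Q s"
    and fin: "\<And>u. u \<in> T \<Longrightarrow> prefix s u \<Longrightarrow> (\<forall>m. prefix s m \<longrightarrow> prefix m u \<longrightarrow> \<not> Q m) \<Longrightarrow> finite {z. u@[z] \<in> T \<and> Q (u@[z])}"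
  defines "TS \<equiv> {l\<in>T. prefix l s \<or> (prefix s l \<and> (\<forall>m. prefix s m \<longrightarrow> prefix m l \<longrightarrow> \<not> Q m))}"
  shows "TS \<in> hechler" "stem TS = s" "TS \<subseteq> T"
proof -
  have tree: "is_tree T" using hechlerD(1)[OF H] .
  have sT: "s \<in> T" using stem_in[OF H] st by simp
  have sTS: "s \<in> TS" unfolding TS_def using sT by simp
  have good: "\<forall>m. prefix s m \<longrightarrow> prefix m u \<longrightarrow> \<not> Q m" if "u \<in> TS" "prefix s u" for u
  proof -
    from that have "prefix u s \<or> (\<forall>m. prefix s m \<longrightarrow> prefix m u \<longrightarrow> \<not> Q m)" unfolding TS_def by blast
    then show ?thesis
    proof
      assume "prefix u s" then have "u = s" using that(2) prefix_order.antisym by blast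
      then show ?thesis using nQ prefix_order.antisym by blast
    qed
  qed
  have cof: "finite {z. u@[z] \<notin> TS}" if "u \<in> TS" "prefix s u" for u
  proof -
    have uT: "u \<in> T" using that unfolding TS_def by blast
    have "{z. u@[z] \<notin> TS} \<subseteq> {z. u@[z] \<notin> T} \<union> {z. u@[z] \<in> T \<and> Q (u@[z])}"
    proof
      fix z assume z: "z \<in> {z. u@[z] \<notin> TS}"
      show "z \<in> {z. u@[z] \<notin> T} \<union> {z. u@[z] \<in> T \<and> Q (u@[z])}"
      proof (rule ccontr)
        assume "z \<notin> {z. u@[z] \<notin> T} \<union> {z. u@[z] \<in> T \<and> Q (u@[z])}"
        then have zz: "u@[z] \<in> T" "\<not> Q (u@[z])" by auto
        have "\<forall>m. prefix s m \<longrightarrow> prefix m (u@[z]) \<longrightarrow> \<not> Q m"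
        proof (intro allI impI)
          fix m assume m: "prefix s m" "prefix m (u@[z])"
          from m(2) have "m = u@[z] \<or> prefix m u" by (rule prefix_snoc_cases)
          then show "\<not> Q m" using good[OF that] zz(2) m(1) by blast
        qed
        moreover have "prefix s (u@[z])" using that(2) by (simp add: prefix_order.trans)
        ultimately have "u@[z] \<in> TS" unfolding TS_def using zz(1) by blast
        then show False using z by simp
      qed
    qed
    moreover have "finite {z. u@[z] \<notin> T}" using hechlerD(3)[OF H uT] that(2) st by simp
    moreover have "finite {z. u@[z] \<in> T \<and> Q (u@[z])}" using fin[OF uT that(2) good[OF that]] .
    ultimately show ?thesis by (meson finite_Un finite_subset)
  qed
  show "TS \<subseteq> T" unfolding TS_def by blast
  have treeTS: "is_tree TS" unfolding is_tree_def
  proof (intro conjI ballI allI impI)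
    show "TS \<noteq> {}" using sTS by blast
  next
    fix t k assume t: "t \<in> TS" and k: "prefix k t"
    have kT: "k \<in> T" using tree t k unfolding is_tree_def TS_def by blast
    from t have "prefix t s \<or> (prefix s t \<and> (\<forall>m. prefix s m \<longrightarrow> prefix m t \<longrightarrow> \<not> Q m))" unfolding TS_def by blast
    then show "k \<in> TS"
    proof
      assume "prefix t s" then have "prefix k s" using prefix_order.trans[OF k] by blast
      then show ?thesis unfolding TS_def using kT by blast
    next
      assume a: "prefix s t \<and> (\<forall>m. prefix s m \<longrightarrow> prefix m t \<longrightarrow> \<not> Q m)"
      have "prefix k s \<or> prefix s k" using a k prefix_same_cases by blast
      then show ?thesis
      proof
        assume "prefix k s" then show ?thesis unfolding TS_def using kT by blast
      next
        assume "prefix s k"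
        moreover have "\<forall>m. prefix s m \<longrightarrow> prefix m k \<longrightarrow> \<not> Q m" using a k prefix_order.trans by blast
        ultimately show ?thesis unfolding TS_def using kT by blast
      qed
    qed
  qed
  have cmp: "prefix s t \<or> prefix t s" if "t \<in> TS" for t using that unfolding TS_def by blast
  have stemTS: "is_stem TS s" unfolding is_stem_def
  proof (intro conjI ballI impI)
    show "s \<in> TS" by (rule sTS)
  next
    fix t assume "t \<in> TS" then show "prefix s t \<or> prefix t s" by (rule cmp)
  next
    fix s' assume s': "s' \<in> TS" and all: "\<forall>t\<in>TS. prefix s' t \<or> prefix t s'"
    show "prefix s' s"
    proof (rule ccontr)
      assume ns: "\<not> prefix s' s"
      then have "prefix s s'" using cmp[OF s'] by blast
      with ns have len: "length s < length s'"
        using prefix_length_less[of s s'] by (metis strict_prefix_def prefix_order.refl)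
      have "infinite {z. s@[z] \<in> TS}"
      proof
        assume "finite {z. s@[z] \<in> TS}"
        then have "finite ({z. s@[z] \<in> TS} \<union> {z. s@[z] \<notin> TS})" using cof[OF sTS] by simp
        moreover have "{z. s@[z] \<in> TS} \<union> {z. s@[z] \<notin> TS} = (UNIV :: nat set)" by auto
        ultimately show False by simp
      qed
      then obtain z where z: "s@[z] \<in> TS" "z \<noteq> s' ! length s"
        using infinite_imp_nonempty[OF infinite_remove[OF \<open>infinite {z. s@[z] \<in> TS}\<close>, of "s' ! length s"]] by blast
      have "prefix s' (s@[z]) \<or> prefix (s@[z]) s'" using all z(1) by blast
      moreover have "prefix (s@[z]) s' \<Longrightarrow> s' ! length s = z"
        by (auto simp: prefix_def nth_append)
      moreover have "prefix s' (s@[z]) \<Longrightarrow> s' = s@[z]"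
        using prefix_snoc_cases[of s' s z] ns by blast
      ultimately show False using z(2) by auto
    qed
  qed
  show "stem TS = s" using stem_eq[OF stemTS] .
  show "TS \<in> hechler" unfolding hechler_def using treeTS stemTS cof by blast
qed

lemma stem_below:
  assumes H: "T2 \<in> hechler" and sub: "T2 \<subseteq> TS" and cmp: "\<forall>l\<in>TS. prefix l s \<or> prefix s l"
  shows "prefix s (stem T2)"
proof (rule ccontr)
  let ?r = "stem T2"
  assume n: "\<not> prefix s ?r"
  have "?r \<in> TS" using stem_in[OF H] sub by blast
  then have rs: "prefix ?r s" "?r \<noteq> s" using cmp n by auto
  then have len: "length ?r < length s" using prefix_length_less[of ?r s] by (simp add: strict_prefix_def)
  have "{z. ?r@[z] \<in> T2} \<subseteq> {s ! length ?r}"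
  proof
    fix z assume "z \<in> {z. ?r@[z] \<in> T2}"
    then have "?r@[z] \<in> TS" using sub by blast
    then have "prefix (?r@[z]) s \<or> prefix s (?r@[z])" using cmp by blast
    moreover have "prefix s (?r@[z]) \<Longrightarrow> prefix (?r@[z]) s"
    proof -
      assume "prefix s (?r@[z])"
      then have "s = ?r@[z] \<or> prefix s ?r" by (rule prefix_snoc_cases)
      then show ?thesis using rs prefix_order.antisym by blast
    qed
    ultimately have "prefix (?r@[z]) s" by blast
    then have "s ! length ?r = z" by (auto simp: prefix_def nth_append)
    then show "z \<in> {s ! length ?r}" by simp
  qed
  then have "finite {z. ?r@[z] \<in> T2}" by (rule finite_subset) simp
  moreover have "infinite {z. ?r@[z] \<in> T2}" using succ_inf[OF H stem_in[OF H]] by simp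
  ultimately show False by simp
qed




context zfm begin

lemma ord_elem: "ordE E a \<Longrightarrow> E y a \<Longrightarrow> ordE E y"
  unfolding ordE_def by blast

lemma ord_trich: "ordE E a \<Longrightarrow> ordE E b \<Longrightarrow> E a b \<or> a = b \<or> E b a"
proof (induction a arbitrary: b rule: wfp_induct_rule[OF wf])
  case (1 a)
  note IHa = 1(1)
  show ?case using 1(3)
  proof (induction b rule: wfp_induct_rule[OF wf])
    case (1 b)
    note IHb = 1(1)
    show ?case
    proof (rule ccontr)
      assume c: "\<not> (E a b \<or> a = b \<or> E b a)"
      have "a = b"
      proof (rule ext)
        fix z show "E z a \<longleftrightarrow> E z b"
        proof
          assume za: "E z a"
          have oz: "ordE E z" using ord_elem[OF \<open>ordE E a\<close> za] .
          have "E z b \<or> z = b \<or> E b z" using IHa[OF za oz \<open>ordE E b\<close>] .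
          moreover have "\<not> z = b" using c za by blast
          moreover have "\<not> E b z" using c za \<open>ordE E a\<close> unfolding ordE_def by blast
          ultimately show "E z b" by blast
        next
          assume zb: "E z b"
          have oz: "ordE E z" using ord_elem[OF \<open>ordE E b\<close> zb] .
          have "E a z \<or> a = z \<or> E z a" using IHb[OF zb oz] .
          moreover have "\<not> a = z" using c zb by blast
          moreover have "\<not> E a z" using c zb \<open>ordE E b\<close> unfolding ordE_def by blast
          ultimately show "E z a" by blast
        qed
      qed
      then show False using c by blast
    qed
  qed
qed

lemma ord_succ: "ordE E b \<Longrightarrow> (\<forall>x. E x c \<longleftrightarrow> E x b \<or> x = b) \<Longrightarrow> ordE E c"
  unfolding ordE_def by blast

lemma ord_one: "(\<forall>x. \<not> E x e) \<Longrightarrow> (\<forall>x. E x c \<longleftrightarrow> x = e) \<Longrightarrow> ordE E c"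
  unfolding ordE_def by auto

lemma ord_Union: "(\<forall>w. E w c \<longleftrightarrow> (\<exists>a. E a B \<and> ordE E a \<and> E w a)) \<Longrightarrow> ordE E c"
  unfolding ordE_def by blast

lemma least_ex: assumes "hwE E Dm Tm v" shows "\<exists>!a. leastE E Dm Tm v a"
proof -
  from assms obtain a0 where a0: "ordE E a0" "witBE E Dm Tm v a0" unfolding hwE_def by blast
  have mem: "a0 \<in> {a. ordE E a \<and> witBE E Dm Tm v a}" using a0 by simp
  have "\<exists>a\<in>{a. ordE E a \<and> witBE E Dm Tm v a}. \<forall>a'. E a' a \<longrightarrow> a' \<notin> {a. ordE E a \<and> witBE E Dm Tm v a}"
    using wf[unfolded wfp_eq_minimal, rule_format, OF mem] .
  then obtain a where a: "ordE E a" "witBE E Dm Tm v a" "\<And>a'. E a' a \<Longrightarrow> \<not> (ordE E a' \<and> witBE E Dm Tm v a')" by blast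
  have la: "leastE E Dm Tm v a" unfolding leastE_def using a ord_elem[OF a(1)] by blast
  show ?thesis
  proof (rule ex1I[of _ a])
    show "leastE E Dm Tm v a" by (rule la)
  next
    fix a' assume la': "leastE E Dm Tm v a'"
    have "E a a' \<or> a = a' \<or> E a' a" using ord_trich la la' unfolding leastE_def by blast
    then show "a' = a" using la la' unfolding leastE_def by blast
  qed
qed

lemma inR_mono: "inRE E v b R \<Longrightarrow> (\<forall>p. E p R \<longrightarrow> E p R') \<Longrightarrow> inRE E v b R'"
  unfolding inRE_def by blast

lemma lower_mono: "lowerE E v b R \<Longrightarrow> (\<forall>p. E p R \<longrightarrow> E p R') \<Longrightarrow> lowerE E v b R'"
  unfolding lowerE_def inRE_def by blast

lemma unb_mono: "unbE E Tm u b R \<Longrightarrow> (\<forall>p. E p R \<longrightarrow> E p R') \<Longrightarrow> unbE E Tm u b R'"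
  unfolding unbE_def using lower_mono by blast

lemma pair_members: assumes "is_pair E p u b" "E z p" "E w z" shows "w = u \<or> w = b"
  using assms unfolding is_pair_def by blast

lemma pair_mem_snd: assumes "is_pair E p a c" shows "\<exists>z. E z p \<and> E c z"
proof -
  obtain z where z: "\<forall>x. E x z \<longleftrightarrow> x = a \<or> x = c" using upair_ex by blast
  then have "E z p" using assms unfolding is_pair_def by blast
  then show ?thesis using z by blast
qed

end



definition valsE :: "('m \<Rightarrow> 'm \<Rightarrow> bool) \<Rightarrow> 'm \<Rightarrow> 'm \<Rightarrow> bool" where
  "valsE E R a \<longleftrightarrow> (\<forall>p. E p R \<longrightarrow> (\<exists>u b. is_pair E p u b \<and> E b a))"
definition fvals where "fvals R a n = FAll n (FImp (Mem n R) (Ex (n+1) (Ex (n+2) (Conj (fpair n (n+1) (n+2) (n+3)) (Mem (n+2) a)))))"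
lemma sat_fvals[simp]: "R < n \<Longrightarrow> a < n \<Longrightarrow> sat E (fvals R a n) env \<longleftrightarrow> valsE E (env R) (env a)"
  by (simp add: fvals_def valsE_def)

lemma witBE_alt: "witBE E Dm Tm v a \<longleftrightarrow> (\<exists>R. witE E Dm Tm R \<and> valsE E R a \<and> (\<exists>b. inRE E v b R))"
  unfolding witBE_def valsE_def by blast

locale ctx = zfm E for E :: "'m \<Rightarrow> 'm \<Rightarrow> bool" +
  fixes Dm \<tau> :: 'm and T :: "nat list set"
  assumes cT: "codes_tree E \<tau> T" and TH: "T \<in> hechler"
begin

definition Q :: "nat list \<Rightarrow> bool" where "Q l \<longleftrightarrow> (\<exists>y. codes_seq E y l \<and> hwE E Dm \<tau> y)"

lemma code_in: "l \<in> T \<Longrightarrow> \<exists>y. E y \<tau> \<and> codes_seq E y l"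
  using seq_ex tree_mem[OF cT] by blast

lemma dec_in: "E y \<tau> \<Longrightarrow> \<exists>l\<in>T. codes_seq E y l"
  using cT unfolding codes_tree_def by blast

lemma incl_lemma:
  assumes tb: "\<forall>x. E x tb \<longleftrightarrow> E x \<tau> \<or> E x \<beta>"
    and P1: "\<forall>z. subE E z tb \<longrightarrow> E z P1" and P2: "\<forall>z. subE E z P1 \<longrightarrow> E z P2"
    and R: "witE E Dm \<tau> R" "valsE E R \<beta>" and p: "E p R"
  shows "E p P2"
proof -
  obtain u b where ub: "is_pair E p u b" "E u \<tau>" using R(1) p unfolding witE_def by blast
  obtain u' b' where ub': "is_pair E p u' b'" "E b' \<beta>" using R(2) p unfolding valsE_def by blast
  have "b = b'" using pair_inj[OF ub(1) ub'(1)] by simp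
  have "E z P1" if "E z p" for z
  proof -
    have "subE E z tb" unfolding subE_def
    proof (intro allI impI)
      fix w assume "E w z"
      then have "w = u \<or> w = b" using pair_members[OF ub(1) that] by blast
      then show "E w tb" using tb ub(2) ub'(2) \<open>b = b'\<close> by blast
    qed
    then show ?thesis using P1 by blast
  qed
  then have "subE E p P1" unfolding subE_def by blast
  then show ?thesis using P2 by blast
qed

lemma combine:
  assumes y: "E y \<tau>" "codes_seq E y l" and inf: "infinite {z. l@[z] \<in> T \<and> Q (l@[z])}"
  shows "hwE E Dm \<tau> y"
proof -
  have "\<exists>a. \<forall>x. E x a \<longleftrightarrow> E x \<tau> \<and> (succE E y x \<and> hwE E Dm \<tau> x)"
    by (rule sep[where \<phi>="Conj (fsucc 1 0 5) (fhw 2 3 0 5)" and env="(\<lambda>_. y)(1:=y, 2:=Dm, 3:=\<tau>)" and i=0]) simp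
  then obtain a where a: "\<forall>x. E x a \<longleftrightarrow> E x \<tau> \<and> (succE E y x \<and> hwE E Dm \<tau> x)" by blast
  have "\<exists>bb. \<forall>x. E x a \<longrightarrow> (\<exists>yy. E yy bb \<and> leastE E Dm \<tau> x yy)"
  proof (rule repl[where \<phi>="fleast 2 3 0 4 5" and env="(\<lambda>_. y)(2:=Dm, 3:=\<tau>)" and i=0 and j=4])
    show "(0::nat) \<noteq> 4" by simp
  next
    fix x yy show "sat E (fleast 2 3 0 4 5) (((\<lambda>_. y)(2:=Dm, 3:=\<tau>))(0 := x, 4 := yy)) = leastE E Dm \<tau> x yy"
      by simp
  next
    show "\<forall>x. E x a \<longrightarrow> (\<exists>!yy. leastE E Dm \<tau> x yy)" using a least_ex by blast
  qed
  then obtain bb where bb: "\<forall>x. E x a \<longrightarrow> (\<exists>yy. E yy bb \<and> leastE E Dm \<tau> x yy)" by blast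
  obtain U where U: "\<forall>w. E w U \<longleftrightarrow> (\<exists>al. E al bb \<and> E w al)" using union_ex by blast
  have "\<exists>\<beta>. \<forall>w. E w \<beta> \<longleftrightarrow> E w U \<and> (\<exists>al. E al bb \<and> ordE E al \<and> E w al)"
    by (rule sep[where \<phi>="Ex 5 (Conj (Mem 5 1) (Conj (ford 5 6) (Mem 0 5)))" and env="(\<lambda>_. y)(1:=bb)" and i=0]) simp
  then obtain \<beta> where \<beta>0: "\<forall>w. E w \<beta> \<longleftrightarrow> E w U \<and> (\<exists>al. E al bb \<and> ordE E al \<and> E w al)" by blast
  have \<beta>: "\<forall>w. E w \<beta> \<longleftrightarrow> (\<exists>al. E al bb \<and> ordE E al \<and> E w al)" using \<beta>0 U by blast
  have ordb: "ordE E \<beta>" using ord_Union[OF \<beta>] .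
  have a_least: "\<exists>al. leastE E Dm \<tau> x al \<and> subE E al \<beta>" if xa: "E x a" for x
  proof -
    obtain al where "E al bb" "leastE E Dm \<tau> x al" using bb xa by blast
    moreover then have "ordE E al" unfolding leastE_def by blast
    ultimately show ?thesis using \<beta> unfolding subE_def by blast
  qed
  obtain tb where tb: "\<forall>x. E x tb \<longleftrightarrow> E x \<tau> \<or> E x \<beta>" using un_ex by blast
  obtain P1 where P1: "\<forall>z. subE E z tb \<longrightarrow> E z P1" using pow_ex by blast
  obtain P2 where P2: "\<forall>z. subE E z P1 \<longrightarrow> E z P2" using pow_ex by blast
  have "\<exists>Rb. \<forall>p. E p Rb \<longleftrightarrow> E p P2 \<and> (\<exists>R. witE E Dm \<tau> R \<and> valsE E R \<beta> \<and> E p R)"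
    by (rule sep[where \<phi>="Ex 5 (Conj (fwit 2 3 5 6) (Conj (fvals 5 1 6) (Mem 0 5)))" and env="(\<lambda>_. y)(1:=\<beta>, 2:=Dm, 3:=\<tau>)" and i=0]) simp
  then obtain Rb where Rb0: "\<forall>p. E p Rb \<longleftrightarrow> E p P2 \<and> (\<exists>R. witE E Dm \<tau> R \<and> valsE E R \<beta> \<and> E p R)" by blast
  have incl: "E p Rb" if "witE E Dm \<tau> R" "valsE E R \<beta>" "E p R" for R p
    using Rb0 incl_lemma[OF tb P1 P2 that] that by blast
  have Rb: "\<forall>p. E p Rb \<longleftrightarrow> (\<exists>R. witE E Dm \<tau> R \<and> valsE E R \<beta> \<and> E p R)" using Rb0 incl by blast
  obtain p0 where p0: "is_pair E p0 y \<beta>" using pair_ex by blast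
  obtain s0 where s0: "\<forall>x. E x s0 \<longleftrightarrow> x = p0 \<or> x = p0" using upair_ex by blast
  obtain R' where R'0: "\<forall>x. E x R' \<longleftrightarrow> E x Rb \<or> E x s0" using un_ex by blast
  have R': "\<forall>x. E x R' \<longleftrightarrow> E x Rb \<or> x = p0" using R'0 s0 by blast
  have RbR': "\<forall>p. E p Rb \<longrightarrow> E p R'" using R' by blast
  obtain sb where sb: "\<forall>x. E x sb \<longleftrightarrow> x = \<beta> \<or> x = \<beta>" using upair_ex by blast
  obtain \<beta>' where \<beta>'0: "\<forall>x. E x \<beta>' \<longleftrightarrow> E x \<beta> \<or> E x sb" using un_ex by blast
  have \<beta>': "\<forall>x. E x \<beta>' \<longleftrightarrow> E x \<beta> \<or> x = \<beta>" using \<beta>'0 sb by blast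
  have ordb': "ordE E \<beta>'" using ord_succ[OF ordb \<beta>'] .
  have unb0: "unbE E \<tau> y \<beta> R'" unfolding unbE_def
  proof (intro allI impI)
    fix u1 assume u1: "E u1 \<tau> \<and> succE E y u1"
    obtain l1 where l1: "l1 \<in> T" "codes_seq E u1 l1" using dec_in u1 by blast
    obtain w1 where w1: "l1 = l @ [w1]" using succ_char[OF y(2) l1(2)] u1 by blast
    obtain w2 where w2: "w2 > w1" "l@[w2] \<in> T" "Q (l@[w2])"
      using inf unfolding infinite_nat_iff_unbounded by blast
    obtain u2 where u2: "E u2 \<tau>" "codes_seq E u2 (l@[w2])" using code_in[OF w2(2)] by blast
    have hw2: "hwE E Dm \<tau> u2" using w2(3) u2(2) seq_uniq unfolding Q_def by metis
    have su2: "succE E y u2" using succ_char[OF y(2) u2(2)] by blast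
    have "E u2 a" using a u2(1) su2 hw2 by blast
    then obtain al where al: "leastE E Dm \<tau> u2 al" "subE E al \<beta>" using a_least by blast
    then obtain R2 g where R2: "witE E Dm \<tau> R2" "valsE E R2 al" "inRE E u2 g R2"
      unfolding leastE_def witBE_alt by blast
    have vR2: "valsE E R2 \<beta>" using R2(2) al(2) unfolding valsE_def subE_def by blast
    obtain q where q: "E q R2" "is_pair E q u2 g" using R2(3) unfolding inRE_def by blast
    obtain u' b' where ub': "is_pair E q u' b'" "E b' al" using R2(2) q(1) unfolding valsE_def by blast
    have "g = b'" using pair_inj[OF q(2) ub'(1)] by simp
    then have gb: "E g \<beta>" using ub'(2) al(2) unfolding subE_def by blast
    have "E q R'" using incl[OF R2(1) vR2 q(1)] RbR' by blast
    then have low: "lowerE E u2 \<beta> R'" unfolding lowerE_def inRE_def using gb q(2) by blast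
    obtain c1 where c1: "codes_nat E c1 w1" using nat_ex by blast
    obtain c2 where c2: "codes_nat E c2 w2" using nat_ex by blast
    have v1: "valE E y u1 c1" using val_char[OF y(2), of u1 w1 c1] l1(2) w1 c1 by simp
    have v2: "valE E y u2 c2" using val_char[OF y(2) u2(2)] c2 by simp
    have "E c1 c2" using nat_less[OF c1 c2] w2(1) by simp
    then show "\<exists>u2. E u2 \<tau> \<and> succE E y u2 \<and> lowerE E u2 \<beta> R' \<and> (\<exists>z1 z2. valE E y u1 z1 \<and> valE E y u2 z2 \<and> E z1 z2)"
      using u2(1) su2 low v1 v2 by blast
  qed
  have witR': "witE E Dm \<tau> R'" unfolding witE_def
  proof (intro allI impI)
    fix p assume "E p R'"
    then have "E p Rb \<or> p = p0" using R' by blast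
    then show "\<exists>u b. is_pair E p u b \<and> E u \<tau> \<and> (goodE E Dm \<tau> u \<or> unbE E \<tau> u b R')"
    proof
      assume "E p Rb"
      then obtain R where R: "witE E Dm \<tau> R" "valsE E R \<beta>" "E p R" using Rb by blast
      then obtain u b where "is_pair E p u b" "E u \<tau>" "goodE E Dm \<tau> u \<or> unbE E \<tau> u b R"
        unfolding witE_def by blast
      moreover have "\<forall>p. E p R \<longrightarrow> E p R'" using incl[OF R(1) R(2)] RbR' by blast
      ultimately show ?thesis using unb_mono by blast
    next
      assume "p = p0"
      then show ?thesis using p0 y(1) unb0 by blast
    qed
  qed
  have valsR': "valsE E R' \<beta>'" unfolding valsE_def
  proof (intro allI impI)
    fix p assume "E p R'"
    then have "E p Rb \<or> p = p0" using R' by blast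
    then show "\<exists>u b. is_pair E p u b \<and> E b \<beta>'"
    proof
      assume "E p Rb"
      then obtain R where R: "valsE E R \<beta>" "E p R" using Rb by blast
      then show ?thesis using \<beta>' unfolding valsE_def by blast
    next
      assume "p = p0" then show ?thesis using p0 \<beta>' by blast
    qed
  qed
  have "inRE E y \<beta> R'" unfolding inRE_def using p0 R' by blast
  then have "witBE E Dm \<tau> y \<beta>'" unfolding witBE_alt using witR' valsR' by blast
  then show ?thesis unfolding hwE_def using ordb' by blast
qed

end



lemma ext_A_step: assumes "ext_A A (l@[z]) r" "z \<notin> A" shows "ext_A A l r"
proof -
  have p: "prefix (l@[z]) r" using assms(1) unfolding ext_A_def by blast
  then have "prefix l r" by (metis prefix_order.trans prefix_snoc prefix_order.refl)
  moreover have "r ! n \<notin> A" if "length l \<le> n" "n < length r" for n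
  proof (cases "n = length l")
    case True
    then have "r ! n = z" using p by (auto simp: prefix_def nth_append)
    then show ?thesis using assms(2) by simp
  next
    case False
    then have "length (l@[z]) \<le> n" using that by simp
    then show ?thesis using assms(1) that(2) unfolding ext_A_def by blast
  qed
  ultimately show ?thesis unfolding ext_A_def by blast
qed

context ctx begin

lemma good_dec: assumes OD: "open_dense_in E Dm" and g: "goodE E Dm \<tau> u" and u: "codes_seq E u l"
  shows "\<exists>T'\<in>tree_members E Dm. T' \<subseteq> T \<and> stem T' = l"
proof -
  obtain d where d: "E d Dm" "subE E d \<tau>" "E u d" "\<forall>u'. E u' d \<longrightarrow> cmpE E u' u"
    "\<forall>v. E v d \<longrightarrow> (\<forall>u'. E u' d \<longrightarrow> cmpE E u' v) \<longrightarrow> subE E v u" using g unfolding goodE_def by blast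
  obtain T' where T': "T' \<in> hechler_in E" "codes_tree E d T'" using OD d(1) unfolding open_dense_in_def by blast
  have mem: "T' \<in> tree_members E Dm" unfolding tree_members_def using d(1) T'(2) by blast
  have sub: "T' \<subseteq> T"
  proof
    fix l' assume "l' \<in> T'"
    obtain y' where y': "codes_seq E y' l'" using seq_ex by blast
    have "E y' d" using tree_mem[OF T'(2) y'] \<open>l' \<in> T'\<close> by blast
    then have "E y' \<tau>" using d(2) unfolding subE_def by blast
    then show "l' \<in> T" using tree_mem[OF cT y'] by blast
  qed
  have lT': "l \<in> T'" using tree_mem[OF T'(2) u] d(3) by blast
  have stem: "is_stem T' l" unfolding is_stem_def
  proof (intro conjI ballI impI)
    show "l \<in> T'" by (rule lT')
  next
    fix t assume "t \<in> T'"
    obtain yt where yt: "codes_seq E yt t" using seq_ex by blast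
    have "E yt d" using tree_mem[OF T'(2) yt] \<open>t \<in> T'\<close> by blast
    then have "cmpE E yt u" using d(4) by blast
    then show "prefix l t \<or> prefix t l" unfolding cmpE_def using seq_sub[OF yt u] seq_sub[OF u yt] by blast
  next
    fix s' assume s': "s' \<in> T'" and all: "\<forall>t\<in>T'. prefix s' t \<or> prefix t s'"
    obtain v where v: "codes_seq E v s'" using seq_ex by blast
    have vd: "E v d" using tree_mem[OF T'(2) v] s' by blast
    have "\<forall>u'. E u' d \<longrightarrow> cmpE E u' v"
    proof (intro allI impI)
      fix u' assume u'd: "E u' d"
      obtain t where t: "t \<in> T'" "codes_seq E u' t" using T'(2) u'd unfolding codes_tree_def by blast
      then have "prefix s' t \<or> prefix t s'" using all by blast
      then show "cmpE E u' v" unfolding cmpE_def using seq_sub[OF t(2) v] seq_sub[OF v t(2)] by blast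
    qed
    then have "subE E v u" using d(5) vd by blast
    then show "prefix s' l" using seq_sub[OF v u] by blast
  qed
  show ?thesis using mem sub stem_eq[OF stem] by blast
qed

lemma good_of_tree: assumes d: "E d Dm" "codes_tree E d T2" and H2: "T2 \<in> hechler" and sub: "T2 \<subseteq> T"
  and rc: "codes_seq E rc (stem T2)"
  shows "goodE E Dm \<tau> rc"
proof -
  have st: "is_stem T2 (stem T2)" using hechlerD(2)[OF H2] .
  have "subE E d \<tau>" unfolding subE_def
  proof (intro allI impI)
    fix w assume "E w d"
    then obtain lw where "lw \<in> T2" "codes_seq E w lw" using d(2) unfolding codes_tree_def by blast
    then show "E w \<tau>" using tree_mem[OF cT] sub by blast
  qed
  moreover have "E rc d" using tree_mem[OF d(2) rc] stem_in[OF H2] by blast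
  moreover have "\<forall>u. E u d \<longrightarrow> cmpE E u rc"
  proof (intro allI impI)
    fix u assume "E u d"
    then obtain lu where lu: "lu \<in> T2" "codes_seq E u lu" using d(2) unfolding codes_tree_def by blast
    then have "prefix (stem T2) lu \<or> prefix lu (stem T2)" using st unfolding is_stem_def by blast
    then show "cmpE E u rc" unfolding cmpE_def using seq_sub[OF lu(2) rc] seq_sub[OF rc lu(2)] by blast
  qed
  moreover have "\<forall>v. E v d \<longrightarrow> (\<forall>u. E u d \<longrightarrow> cmpE E u v) \<longrightarrow> subE E v rc"
  proof (intro allI impI)
    fix v assume vd: "E v d" and allv: "\<forall>u. E u d \<longrightarrow> cmpE E u v"
    obtain lv where lv: "lv \<in> T2" "codes_seq E v lv" using d(2) vd unfolding codes_tree_def by blast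
    have "\<forall>t\<in>T2. prefix lv t \<or> prefix t lv"
    proof
      fix t assume "t \<in> T2"
      obtain yt where yt: "codes_seq E yt t" using seq_ex by blast
      have "E yt d" using tree_mem[OF d(2) yt] \<open>t \<in> T2\<close> by blast
      then have "cmpE E yt v" using allv by blast
      then show "prefix lv t \<or> prefix t lv" unfolding cmpE_def using seq_sub[OF yt lv(2)] seq_sub[OF lv(2) yt] by blast
    qed
    then have "prefix lv (stem T2)" using st lv(1) unfolding is_stem_def by blast
    then show "subE E v rc" using seq_sub[OF lv(2) rc] by blast
  qed
  ultimately show ?thesis unfolding goodE_def using d(1) by blast
qed

lemma good_hw: assumes g: "goodE E Dm \<tau> u" and u: "E u \<tau>" shows "hwE E Dm \<tau> u"
proof -
  obtain e where e: "\<forall>z. \<not> E z e" using empty_ex by blast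
  obtain one where one: "\<forall>x. E x one \<longleftrightarrow> x = e \<or> x = e" using upair_ex by blast
  obtain p0 where p0: "is_pair E p0 u e" using pair_ex by blast
  obtain R0 where R0: "\<forall>x. E x R0 \<longleftrightarrow> x = p0 \<or> x = p0" using upair_ex by blast
  have o1: "ordE E one" using ord_one[OF e] one by simp
  have R0': "\<forall>x. E x R0 \<longleftrightarrow> x = p0" using R0 by simp
  have "witE E Dm \<tau> R0" unfolding witE_def
  proof (intro allI impI)
    fix p assume "E p R0" then have "p = p0" using R0' by simp
    then show "\<exists>u b. is_pair E p u b \<and> E u \<tau> \<and> (goodE E Dm \<tau> u \<or> unbE E \<tau> u b R0)" using p0 u g by blast
  qed
  moreover have "valsE E R0 one" unfolding valsE_def
  proof (intro allI impI)
    fix p assume "E p R0" then have "p = p0" using R0' by simp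
    then show "\<exists>u b. is_pair E p u b \<and> E b one" using p0 one by blast
  qed
  moreover have "inRE E u e R0" unfolding inRE_def using R0 p0 by blast
  ultimately show ?thesis unfolding hwE_def witBE_alt using o1 by blast
qed

end



context ctx begin

lemma claim1: assumes OD: "open_dense_in E Dm" and \<sigma>: "E \<sigma> \<tau>" "codes_seq E \<sigma> (stem T)"
  shows "hwE E Dm \<tau> \<sigma>"
proof (rule ccontr)
  assume nh: "\<not> hwE E Dm \<tau> \<sigma>"
  define s where "s = stem T"
  have nQ: "\<not> Q s"
  proof
    assume "Q s" then obtain y where "codes_seq E y s" "hwE E Dm \<tau> y" unfolding Q_def by blast
    then show False using seq_uniq[OF \<sigma>(2)] nh s_def by blast
  qed
  have fin: "finite {z. u@[z] \<in> T \<and> Q (u@[z])}"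
    if u: "u \<in> T" "prefix s u" "\<forall>m. prefix s m \<longrightarrow> prefix m u \<longrightarrow> \<not> Q m" for u
  proof (rule ccontr)
    assume inf: "infinite {z. u@[z] \<in> T \<and> Q (u@[z])}"
    obtain yu where yu: "E yu \<tau>" "codes_seq E yu u" using code_in[OF u(1)] by blast
    have "hwE E Dm \<tau> yu" using combine[OF yu inf] .
    then have "Q u" unfolding Q_def using yu by blast
    then show False using u(2,3) by blast
  qed
  define TS where "TS = {l\<in>T. prefix l s \<or> (prefix s l \<and> (\<forall>m. prefix s m \<longrightarrow> prefix m l \<longrightarrow> \<not> Q m))}"
  have TSp: "TS \<in> hechler" "stem TS = s" "TS \<subseteq> T"
    using Tstar_hechler[OF TH s_def[symmetric] nQ fin] unfolding TS_def by blast+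
  have "\<exists>ts. \<forall>x. E x ts \<longleftrightarrow> E x \<tau> \<and> (subE E x \<sigma> \<or> (subE E \<sigma> x \<and> (\<forall>v. E v \<tau> \<longrightarrow> subE E \<sigma> v \<longrightarrow> subE E v x \<longrightarrow> \<not> hwE E Dm \<tau> v)))"
    by (rule sep[where \<phi>="FOr (fsub 0 1 5) (Conj (fsub 1 0 5) (FAll 5 (FImp (Mem 5 3) (FImp (fsub 1 5 6) (FImp (fsub 5 0 6) (Neg (fhw 2 3 5 6)))))))"
          and env="(\<lambda>_. \<sigma>)(1:=\<sigma>, 2:=Dm, 3:=\<tau>)" and i=0]) simp
  then obtain ts where ts: "\<forall>x. E x ts \<longleftrightarrow> E x \<tau> \<and> (subE E x \<sigma> \<or> (subE E \<sigma> x \<and> (\<forall>v. E v \<tau> \<longrightarrow> subE E \<sigma> v \<longrightarrow> subE E v x \<longrightarrow> \<not> hwE E Dm \<tau> v)))"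
    by blast
  have treeT: "is_tree T" using hechlerD(1)[OF TH] .
  have equiv: "(\<forall>v. E v \<tau> \<longrightarrow> subE E \<sigma> v \<longrightarrow> subE E v y \<longrightarrow> \<not> hwE E Dm \<tau> v) \<longleftrightarrow> (\<forall>m. prefix s m \<longrightarrow> prefix m l \<longrightarrow> \<not> Q m)"
    if y: "codes_seq E y l" "l \<in> T" for y l
  proof
    assume A: "\<forall>v. E v \<tau> \<longrightarrow> subE E \<sigma> v \<longrightarrow> subE E v y \<longrightarrow> \<not> hwE E Dm \<tau> v"
    show "\<forall>m. prefix s m \<longrightarrow> prefix m l \<longrightarrow> \<not> Q m"
    proof (intro allI impI)
      fix m assume m: "prefix s m" "prefix m l"
      have "m \<in> T" using treeT y(2) m(2) unfolding is_tree_def by blast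
      then obtain v where v: "E v \<tau>" "codes_seq E v m" using code_in by blast
      have "subE E \<sigma> v" using seq_sub[OF \<sigma>(2) v(2)] m(1) s_def by simp
      moreover have "subE E v y" using seq_sub[OF v(2) y(1)] m(2) by simp
      ultimately have "\<not> hwE E Dm \<tau> v" using A v(1) by blast
      then show "\<not> Q m" unfolding Q_def using seq_uniq[OF v(2)] by blast
    qed
  next
    assume B: "\<forall>m. prefix s m \<longrightarrow> prefix m l \<longrightarrow> \<not> Q m"
    show "\<forall>v. E v \<tau> \<longrightarrow> subE E \<sigma> v \<longrightarrow> subE E v y \<longrightarrow> \<not> hwE E Dm \<tau> v"
    proof (intro allI impI)
      fix v assume v: "E v \<tau>" "subE E \<sigma> v" "subE E v y"
      obtain m where m: "m \<in> T" "codes_seq E v m" using dec_in[OF v(1)] by blast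
      have "prefix s m" using seq_sub[OF \<sigma>(2) m(2)] v(2) s_def by simp
      moreover have "prefix m l" using seq_sub[OF m(2) y(1)] v(3) by simp
      ultimately have "\<not> Q m" using B by blast
      then show "\<not> hwE E Dm \<tau> v" unfolding Q_def using m(2) by blast
    qed
  qed
  have cts: "codes_tree E ts TS" unfolding codes_tree_def
  proof (intro allI iffI)
    fix y assume "E y ts"
    then have yt: "E y \<tau>" and P: "subE E y \<sigma> \<or> (subE E \<sigma> y \<and> (\<forall>v. E v \<tau> \<longrightarrow> subE E \<sigma> v \<longrightarrow> subE E v y \<longrightarrow> \<not> hwE E Dm \<tau> v))"
      using ts by blast+
    obtain l where l: "l \<in> T" "codes_seq E y l" using dec_in[OF yt] by blast
    have "prefix l s \<or> (prefix s l \<and> (\<forall>m. prefix s m \<longrightarrow> prefix m l \<longrightarrow> \<not> Q m))"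
      using P seq_sub[OF l(2) \<sigma>(2)] seq_sub[OF \<sigma>(2) l(2)] equiv[OF l(2) l(1)] s_def by simp
    then have "l \<in> TS" unfolding TS_def using l(1) by blast
    then show "\<exists>l\<in>TS. codes_seq E y l" using l(2) by blast
  next
    fix y assume "\<exists>l\<in>TS. codes_seq E y l"
    then obtain l where l: "l \<in> TS" "codes_seq E y l" by blast
    have lT: "l \<in> T" and P: "prefix l s \<or> (prefix s l \<and> (\<forall>m. prefix s m \<longrightarrow> prefix m l \<longrightarrow> \<not> Q m))"
      using l(1) unfolding TS_def by blast+
    have "E y \<tau>" using tree_mem[OF cT l(2)] lT by blast
    moreover have "subE E y \<sigma> \<or> (subE E \<sigma> y \<and> (\<forall>v. E v \<tau> \<longrightarrow> subE E \<sigma> v \<longrightarrow> subE E v y \<longrightarrow> \<not> hwE E Dm \<tau> v))"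
      using P seq_sub[OF l(2) \<sigma>(2)] seq_sub[OF \<sigma>(2) l(2)] equiv[OF l(2) lT] s_def by simp
    ultimately show "E y ts" using ts by blast
  qed
  have "TS \<in> hechler_in E" unfolding hechler_in_def using TSp(1) cts by blast
  then obtain T2 where T2: "T2 \<in> tree_members E Dm" "T2 \<subseteq> TS" using OD unfolding open_dense_in_def by blast
  then obtain d where d: "E d Dm" "codes_tree E d T2" unfolding tree_members_def by blast
  obtain T0 where T0: "T0 \<in> hechler_in E" "codes_tree E d T0" using OD d(1) unfolding open_dense_in_def by blast
  have "T0 = T2" using tree_dec[OF T0(2) d(2)] .
  then have H2: "T2 \<in> hechler" using T0(1) unfolding hechler_in_def by blast
  have "\<forall>l\<in>TS. prefix l s \<or> prefix s l" unfolding TS_def by blast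
  then have ps: "prefix s (stem T2)" using stem_below[OF H2 T2(2)] by blast
  have rTS: "stem T2 \<in> TS" using stem_in[OF H2] T2(2) by blast
  have nQr: "\<not> Q (stem T2)"
  proof -
    have "prefix (stem T2) s \<or> (prefix s (stem T2) \<and> (\<forall>m. prefix s m \<longrightarrow> prefix m (stem T2) \<longrightarrow> \<not> Q m))"
      using rTS unfolding TS_def by blast
    then show ?thesis
    proof
      assume "prefix (stem T2) s" then have "stem T2 = s" using ps prefix_order.antisym by blast
      then show ?thesis using nQ by simp
    qed blast
  qed
  obtain rc where rc: "codes_seq E rc (stem T2)" using seq_ex by blast
  have "goodE E Dm \<tau> rc" using good_of_tree[OF d H2 _ rc] T2(2) TSp(3) by blast
  moreover have "E rc \<tau>" using tree_mem[OF cT rc] rTS TSp(3) by blast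
  ultimately have "hwE E Dm \<tau> rc" by (rule good_hw)
  then have "Q (stem T2)" unfolding Q_def using rc by blast
  then show False using nQr by simp
qed

end



context ctx begin

lemma claim2: assumes OD: "open_dense_in E Dm" and EV: "evasive E A" and W: "witE E Dm \<tau> R"
  shows "\<forall>u l. inRE E u b R \<longrightarrow> codes_seq E u l \<longrightarrow> prefix (stem T) l \<longrightarrow> (\<exists>T'\<in>tree_members E Dm. T' \<subseteq> T \<and> ext_A A l (stem T'))"
proof (induction b rule: wfp_induct_rule[OF wf])
  case (1 b)
  note IH = 1
  show ?case
  proof (intro allI impI)
    fix u l assume inR: "inRE E u b R" and u: "codes_seq E u l" and pl: "prefix (stem T) l"
    obtain p where p: "E p R" "is_pair E p u b" using inR unfolding inRE_def by blast
    obtain u' b' where ub': "is_pair E p u' b'" "E u' \<tau>" "goodE E Dm \<tau> u' \<or> unbE E \<tau> u' b' R"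
      using W p(1) unfolding witE_def by blast
    have "u' = u \<and> b' = b" using pair_inj[OF ub'(1) p(2)] .
    then have uT: "E u \<tau>" and gu: "goodE E Dm \<tau> u \<or> unbE E \<tau> u b R" using ub' by simp_all
    have lT: "l \<in> T" using tree_mem[OF cT u] uT by blast
    show "\<exists>T'\<in>tree_members E Dm. T' \<subseteq> T \<and> ext_A A l (stem T')"
    proof (cases "goodE E Dm \<tau> u")
      case True
      then obtain T' where "T' \<in> tree_members E Dm" "T' \<subseteq> T" "stem T' = l" using good_dec[OF OD True u] by blast
      moreover have "ext_A A l l" unfolding ext_A_def by auto
      ultimately show ?thesis by blast
    next
      case False
      then have unb: "unbE E \<tau> u b R" using gu by blast
      define S where "S = {z. \<exists>y'. E y' \<tau> \<and> codes_seq E y' (l@[z]) \<and> lowerE E y' b R}"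
      obtain U1 where U1: "\<forall>x. E x U1 \<longleftrightarrow> (\<exists>y. E y \<tau> \<and> E x y)" using union_ex by blast
      obtain U2 where U2: "\<forall>x. E x U2 \<longleftrightarrow> (\<exists>y. E y U1 \<and> E x y)" using union_ex by blast
      obtain U3 where U3: "\<forall>x. E x U3 \<longleftrightarrow> (\<exists>y. E y U2 \<and> E x y)" using union_ex by blast
      have "\<exists>x. \<forall>c. E c x \<longleftrightarrow> E c U3 \<and> (\<exists>u'. E u' \<tau> \<and> succE E u u' \<and> valE E u u' c \<and> lowerE E u' b R)"
        by (rule sep[where \<phi>="Ex 5 (Conj (Mem 5 3) (Conj (fsucc 1 5 6) (Conj (fval 1 5 0 6) (flower 5 2 4 6))))"
             and env="(\<lambda>_. u)(1:=u, 2:=b, 3:=\<tau>, 4:=R)" and i=0]) simp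
      then obtain x where x: "\<forall>c. E c x \<longleftrightarrow> E c U3 \<and> (\<exists>u'. E u' \<tau> \<and> succE E u u' \<and> valE E u u' c \<and> lowerE E u' b R)"
        by blast
      have cx: "codes_natset E x S" unfolding codes_natset_def
      proof (intro allI iffI)
        fix c assume "E c x"
        then obtain u' where u': "E u' \<tau>" "succE E u u'" "valE E u u' c" "lowerE E u' b R" using x by blast
        obtain l' where l': "l' \<in> T" "codes_seq E u' l'" using dec_in[OF u'(1)] by blast
        obtain z where z: "l' = l @ [z]" using succ_char[OF u l'(2)] u'(2) by blast
        have "codes_nat E c z" using val_char[OF u, of u' z c] l'(2) z u'(3) by simp
        moreover have "z \<in> S" unfolding S_def using u'(1,4) l'(2) z by blast
        ultimately show "\<exists>n\<in>S. codes_nat E c n" by blast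
      next
        fix c assume "\<exists>n\<in>S. codes_nat E c n"
        then obtain n where n: "n \<in> S" "codes_nat E c n" by blast
        then obtain y' where y': "E y' \<tau>" "codes_seq E y' (l@[n])" "lowerE E y' b R" unfolding S_def by blast
        have "succE E u y'" using succ_char[OF u y'(2)] by blast
        moreover have "valE E u y' c" using val_char[OF u y'(2)] n(2) by simp
        moreover have "E c U3"
        proof -
          obtain a0 b0 q where q: "codes_nat E b0 n" "is_pair E q a0 b0" "E q y'"
            using new_pair[OF u y'(2)] by blast
          have "b0 = c" using nat_uniq[OF q(1) n(2)] .
          then obtain zz where zz: "E zz q" "E c zz" using pair_mem_snd[OF q(2)] by blast
          have "E q U1" using U1 q(3) y'(1) by blast
          then have "E zz U2" using U2 zz(1) by blast
          then show ?thesis using U3 zz(2) by blast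
        qed
        ultimately show "E c x" using x y'(1,3) by blast
      qed
      have infS: "infinite S"
      proof
        assume "finite S"
        then obtain N where N: "\<forall>z\<in>S. z < N" using finite_nat_bounded by (metis lessThan_iff subset_eq)
        have "infinite {z. l@[z] \<in> T}" using succ_inf[OF TH lT pl] .
        then obtain z1 where z1: "z1 \<ge> N" "l@[z1] \<in> T" unfolding infinite_nat_iff_unbounded_le by blast
        obtain u1 where u1: "E u1 \<tau>" "codes_seq E u1 (l@[z1])" using code_in[OF z1(2)] by blast
        have "succE E u u1" using succ_char[OF u u1(2)] by blast
        then obtain u2 c1 c2 where u2: "E u2 \<tau>" "succE E u u2" "lowerE E u2 b R" "valE E u u1 c1" "valE E u u2 c2" "E c1 c2"
          using unb u1(1) unfolding unbE_def by blast
        obtain l2 where l2: "l2 \<in> T" "codes_seq E u2 l2" using dec_in[OF u2(1)] by blast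
        obtain z2 where z2: "l2 = l @ [z2]" using succ_char[OF u l2(2)] u2(2) by blast
        have c1: "codes_nat E c1 z1" using val_char[OF u u1(2)] u2(4) by simp
        have c2: "codes_nat E c2 z2" using val_char[OF u, of u2 z2 c2] l2(2) z2 u2(5) by simp
        have "z1 < z2" using nat_less[OF c1 c2] u2(6) by simp
        moreover have "z2 \<in> S" unfolding S_def using u2(1,3) l2(2) z2 by blast
        ultimately show False using N z1(1) by fastforce
      qed
      have "\<not> S \<subseteq> A" using EV cx infS unfolding evasive_def by blast
      then obtain z where z: "z \<in> S" "z \<notin> A" by blast
      then obtain y' where y': "E y' \<tau>" "codes_seq E y' (l@[z])" "lowerE E y' b R" unfolding S_def by blast
      obtain g where g: "E g b" "inRE E y' g R" using y'(3) unfolding lowerE_def by blast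
      have "prefix (stem T) (l@[z])" using pl by (simp add: prefix_order.trans)
      then obtain T' where T': "T' \<in> tree_members E Dm" "T' \<subseteq> T" "ext_A A (l@[z]) (stem T')"
        using IH[OF g(1)] g(2) y'(2) by blast
      then show ?thesis using ext_A_step[OF T'(3) z(2)] by blast
    qed
  qed
qed

end

theorem lemma5p4:
  fixes E :: "'m \<Rightarrow> 'm \<Rightarrow> bool" and A :: "nat set" and D :: 'm and T :: "nat list set"
  assumes "transitive_ZF_model E"
    and "evasive E A"
    and "open_dense_in E D"
    and "T \<in> hechler_in E"
  shows "\<exists>T'\<in>tree_members E D. le_A A T' T"
proof -
  obtain \<tau> where tau: "codes_tree E \<tau> T" using assms(4) unfolding hechler_in_def by blast
  have TH: "T \<in> hechler" using assms(4) unfolding hechler_in_def by blast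
  interpret ctx E D \<tau> T
    by (unfold_locales) (use assms(1) tau TH in auto)
  obtain \<sigma> where \<sigma>: "E \<sigma> \<tau>" "codes_seq E \<sigma> (stem T)" using code_in[OF stem_in[OF TH]] by blast
  have "hwE E D \<tau> \<sigma>" using claim1[OF assms(3) \<sigma>] .
  then obtain R b where R: "witE E D \<tau> R" "inRE E \<sigma> b R" unfolding hwE_def witBE_alt by blast
  have "\<exists>T'\<in>tree_members E D. T' \<subseteq> T \<and> ext_A A (stem T) (stem T')"
    using claim2[OF assms(3) assms(2) R(1)] R(2) \<sigma>(2) by blast
  then show ?thesis unfolding le_A_def by blast
qed


end
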